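(* Let $S$ be a group, $N\triangleleft S$ a proper normal subgroup, $B$ any left $S$-act and $I$ a set with $|I|\ge1$. Then $B\amalg\overline{N}^{(\ast)I}$ is geometrically equivalent to $B\amalg\overline{N}$, and $\overline{N}^{(\ast)I}$ is geometrically equivalent to $\overline{N}$.
   Context: A left $S$-act is a nonempty set with an action $S\times A\to A$ satisfying $1a=a$, $(st)a=s(ta)$; homomorphisms preserve the action; $\amalg$ denotes coproduct (disjoint union), and $A^{(\ast)I}=\coprod_{i\in I}A_i$ with each $A_i=A$. For a subgroup $K$ of $S$, $\overline{K}=S/K$ is the $S$-act of left cosets with $s\cdot tK=stK$. For a nonempty finite set $X$, $F_X=\coprod_{x\in X}S_x$ is the free $S$-act on $X$. For an $S$-act $G$ and a relation $T\subseteq F_X\times F_X$, $T'_G=\{\mu:F_X\to G \text{ homomorphism}: T\subseteq\ker\mu\}$ and $T''_G=\bigcap_{\mu\in T'_G}\ker\mu$ (empty intersection $=F_X\times F_X$). $S$-acts $G_1,G_2$ are geometrically equivalent iff $T''_{G_1}=T''_{G_2}$ for all nonempty finite $X$ and all $T\subseteq F_X\times F_X$. *)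

theory Defs
  imports "HOL-Algebra.Left_Coset"
begin

definition is_act :: "('g,'m) monoid_scheme \<Rightarrow> 'a set \<Rightarrow> ('g \<Rightarrow> 'a \<Rightarrow> 'a) \<Rightarrow> bool" where
  "is_act S A f \<longleftrightarrow> A \<noteq> {}
     \<and> (\<forall>s\<in>carrier S. \<forall>a\<in>A. f s a \<in> A)
     \<and> (\<forall>a\<in>A. f \<one>\<^bsub>S\<^esub> a = a)
     \<and> (\<forall>s\<in>carrier S. \<forall>t\<in>carrier S. \<forall>a\<in>A. f (s \<otimes>\<^bsub>S\<^esub> t) a = f s (f t a))"

definition is_act_hom :: "('g,'m) monoid_scheme \<Rightarrow> 'a set \<Rightarrow> ('g \<Rightarrow> 'a \<Rightarrow> 'a)
     \<Rightarrow> 'b set \<Rightarrow> ('g \<Rightarrow> 'b \<Rightarrow> 'b) \<Rightarrow> ('a \<Rightarrow> 'b) \<Rightarrow> bool" where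
  "is_act_hom S A f B g h \<longleftrightarrow> (\<forall>a\<in>A. h a \<in> B) \<and> (\<forall>s\<in>carrier S. \<forall>a\<in>A. h (f s a) = g s (h a))"

definition coprod_carrier :: "'a set \<Rightarrow> 'b set \<Rightarrow> ('a + 'b) set" where
  "coprod_carrier A B = A <+> B"

definition coprod_act :: "('g \<Rightarrow> 'a \<Rightarrow> 'a) \<Rightarrow> ('g \<Rightarrow> 'b \<Rightarrow> 'b) \<Rightarrow> 'g \<Rightarrow> 'a + 'b \<Rightarrow> 'a + 'b" where
  "coprod_act f g s = map_sum (f s) (g s)"

text \<open>Copower A^{(*)I} = coproduct of copies A_i (i \<in> I) of A, realised as I \<times> A.\<close>
definition copower_carrier :: "'i set \<Rightarrow> 'a set \<Rightarrow> ('i \<times> 'a) set" where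
  "copower_carrier I A = I \<times> A"

definition copower_act :: "('g \<Rightarrow> 'a \<Rightarrow> 'a) \<Rightarrow> 'g \<Rightarrow> 'i \<times> 'a \<Rightarrow> 'i \<times> 'a" where
  "copower_act f s p = (fst p, f s (snd p))"

definition coset_carrier :: "('g,'m) monoid_scheme \<Rightarrow> 'g set \<Rightarrow> 'g set set" where
  "coset_carrier S K = lcosets\<^bsub>S\<^esub> K"

definition coset_act :: "('g,'m) monoid_scheme \<Rightarrow> 'g \<Rightarrow> 'g set \<Rightarrow> 'g set" where
  "coset_act S s C = s <#\<^bsub>S\<^esub> C"

text \<open>Free S-act F_X = coproduct of copies S_x (x \<in> X), realised as X \<times> S, acting on the second coordinate.\<close>
definition free_carrier :: "('g,'m) monoid_scheme \<Rightarrow> 'x set \<Rightarrow> ('x \<times> 'g) set" where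
  "free_carrier S X = X \<times> carrier S"

definition free_act :: "('g,'m) monoid_scheme \<Rightarrow> 'g \<Rightarrow> 'x \<times> 'g \<Rightarrow> 'x \<times> 'g" where
  "free_act S s p = (fst p, s \<otimes>\<^bsub>S\<^esub> snd p)"

definition act_ker :: "('g,'m) monoid_scheme \<Rightarrow> 'x set \<Rightarrow> ('x \<times> 'g \<Rightarrow> 'a) \<Rightarrow> (('x \<times> 'g) \<times> ('x \<times> 'g)) set" where
  "act_ker S X \<mu> = {(u, v). u \<in> free_carrier S X \<and> v \<in> free_carrier S X \<and> \<mu> u = \<mu> v}"

definition T_prime :: "('g,'m) monoid_scheme \<Rightarrow> 'x set \<Rightarrow> (('x \<times> 'g) \<times> ('x \<times> 'g)) set
     \<Rightarrow> 'a set \<Rightarrow> ('g \<Rightarrow> 'a \<Rightarrow> 'a) \<Rightarrow> ('x \<times> 'g \<Rightarrow> 'a) set" where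
  "T_prime S X T G g = {\<mu>. is_act_hom S (free_carrier S X) (free_act S) G g \<mu> \<and> T \<subseteq> act_ker S X \<mu>}"

text \<open>T''_G: intersection of the kernels; the empty intersection is F_X \<times> F_X.\<close>
definition T_dprime :: "('g,'m) monoid_scheme \<Rightarrow> 'x set \<Rightarrow> (('x \<times> 'g) \<times> ('x \<times> 'g)) set
     \<Rightarrow> 'a set \<Rightarrow> ('g \<Rightarrow> 'a \<Rightarrow> 'a) \<Rightarrow> (('x \<times> 'g) \<times> ('x \<times> 'g)) set" where
  "T_dprime S X T G g = (free_carrier S X \<times> free_carrier S X) \<inter> (\<Inter>\<mu>\<in>T_prime S X T G g. act_ker S X \<mu>)"

text \<open>Geometric equivalence; finite sets X of variables are taken inside nat (w.l.o.g.).\<close>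
definition geom_equiv :: "('g,'m) monoid_scheme \<Rightarrow> 'a set \<Rightarrow> ('g \<Rightarrow> 'a \<Rightarrow> 'a)
     \<Rightarrow> 'b set \<Rightarrow> ('g \<Rightarrow> 'b \<Rightarrow> 'b) \<Rightarrow> bool" where
  "geom_equiv S G1 g1 G2 g2 \<longleftrightarrow>
     (\<forall>X :: nat set. \<forall>T. finite X \<and> X \<noteq> {} \<and> T \<subseteq> free_carrier S X \<times> free_carrier S X
        \<longrightarrow> T_dprime S X T G1 g1 = T_dprime S X T G2 g2)"

end

theory Submission
  imports Defs
begin

lemma hom_comp:
  "is_act_hom S A f B g h \<Longrightarrow> is_act_hom S B g C k \<phi> \<Longrightarrow> is_act_hom S A f C k (\<phi> \<circ> h)"
  unfolding is_act_hom_def by auto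

lemma sep_sub:
  assumes sep: "\<forall>a\<in>G2. \<forall>b\<in>G2. a \<noteq> b \<longrightarrow> (\<exists>\<phi>. is_act_hom S G2 g2 G1 g1 \<phi> \<and> \<phi> a \<noteq> \<phi> b)"
  shows "T_dprime S X T G1 g1 \<subseteq> T_dprime S X T G2 g2"
proof
  fix p assume p: "p \<in> T_dprime S X T G1 g1"
  obtain u v where uv: "p = (u,v)" by (cases p)
  have uvF: "u \<in> free_carrier S X" "v \<in> free_carrier S X"
    using p uv unfolding T_dprime_def by auto
  have "(u,v) \<in> act_ker S X \<nu>" if nu: "\<nu> \<in> T_prime S X T G2 g2" for \<nu>
  proof (rule ccontr)
    assume "(u,v) \<notin> act_ker S X \<nu>"
    hence ne: "\<nu> u \<noteq> \<nu> v" using uvF unfolding act_ker_def by auto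
    have hom: "is_act_hom S (free_carrier S X) (free_act S) G2 g2 \<nu>" and Tk: "T \<subseteq> act_ker S X \<nu>"
      using nu unfolding T_prime_def by auto
    have "\<nu> u \<in> G2" "\<nu> v \<in> G2" using hom uvF unfolding is_act_hom_def by auto
    then obtain \<phi> where ph: "is_act_hom S G2 g2 G1 g1 \<phi>" "\<phi> (\<nu> u) \<noteq> \<phi> (\<nu> v)"
      using sep ne by blast
    have "\<phi> \<circ> \<nu> \<in> T_prime S X T G1 g1"
      unfolding T_prime_def using hom_comp[OF hom ph(1)] Tk
      unfolding act_ker_def by auto
    hence "(u,v) \<in> act_ker S X (\<phi> \<circ> \<nu>)" using p uv unfolding T_dprime_def by auto
    thus False using ph(2) unfolding act_ker_def by auto
  qed
  thus "p \<in> T_dprime S X T G2 g2" using uv uvF unfolding T_dprime_def by auto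
qed

lemma sep_equiv:
  assumes "\<forall>a\<in>G2. \<forall>b\<in>G2. a \<noteq> b \<longrightarrow> (\<exists>\<phi>. is_act_hom S G2 g2 G1 g1 \<phi> \<and> \<phi> a \<noteq> \<phi> b)"
    and "\<forall>a\<in>G1. \<forall>b\<in>G1. a \<noteq> b \<longrightarrow> (\<exists>\<phi>. is_act_hom S G1 g1 G2 g2 \<phi> \<and> \<phi> a \<noteq> \<phi> b)"
  shows "geom_equiv S G1 g1 G2 g2"
  unfolding geom_equiv_def using sep_sub[OF assms(1)] sep_sub[OF assms(2)] by blast

lemma inj_sep:
  assumes "is_act_hom S G1 g1 G2 g2 h" "inj_on h G1"
  shows "\<forall>a\<in>G1. \<forall>b\<in>G1. a \<noteq> b \<longrightarrow> (\<exists>\<phi>. is_act_hom S G1 g1 G2 g2 \<phi> \<and> \<phi> a \<noteq> \<phi> b)"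
  using assms by (meson inj_onD)

context normal
begin

lemma rc_lc: "a \<in> carrier G \<Longrightarrow> g \<in> carrier G \<Longrightarrow> (a <# H) #> g = (a \<otimes> g) <# H"
proof -
  assume a: "a \<in> carrier G" and g: "g \<in> carrier G"
  have "(a <# H) #> g = a <# (H #> g)"
    unfolding l_coset_def r_coset_def using a g
    by (auto simp: m_assoc)
  also have "\<dots> = a <# (g <# H)" using coset_eq g by simp
  also have "\<dots> = (a \<otimes> g) <# H" using lcos_m_assoc[OF subset a g] .
  finally show ?thesis .
qed

lemma lc_rc: "C \<subseteq> carrier G \<Longrightarrow> s \<in> carrier G \<Longrightarrow> g \<in> carrier G \<Longrightarrow> s <# (C #> g) = (s <# C) #> g"
  unfolding l_coset_def r_coset_def
  by (auto simp: m_assoc) (metis m_assoc subsetD)+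

lemma lcos_sub: "C \<in> lcosets H \<Longrightarrow> C \<subseteq> carrier G"
  unfolding LCOSETS_def using l_coset_subset_G subset by blast

lemma rc_in: "C \<in> lcosets H \<Longrightarrow> g \<in> carrier G \<Longrightarrow> C #> g \<in> lcosets H"
  unfolding LCOSETS_def using rc_lc by auto

lemma rc_ne: "C \<in> lcosets H \<Longrightarrow> g \<in> carrier G \<Longrightarrow> g \<notin> H \<Longrightarrow> C #> g \<noteq> C"
proof
  assume C: "C \<in> lcosets H" and g: "g \<in> carrier G" "g \<notin> H" and eq: "C #> g = C"
  obtain a where a: "a \<in> carrier G" "C = a <# H" using C unfolding LCOSETS_def by auto
  have "a \<otimes> g \<in> (a \<otimes> g) <# H" using lcos_self a g is_subgroup by simp
  hence "a \<otimes> g \<in> a <# H" using eq a rc_lc g by simp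
  then obtain n where n: "n \<in> H" "a \<otimes> g = a \<otimes> n" unfolding l_coset_def by auto
  hence "g = n" using a g subset by (metis Units_eq Units_l_cancel subsetD)
  thus False using n g by simp
qed

end

definition fold_map :: "('g,'m) monoid_scheme \<Rightarrow> 'i \<Rightarrow> 'g \<Rightarrow> 'i \<times> 'g set \<Rightarrow> 'g set" where
  "fold_map S i0 g p = (if fst p = i0 then snd p else snd p #>\<^bsub>S\<^esub> g)"

lemma fold_hom:
  assumes "N \<lhd> S" "g \<in> carrier S"
  shows "is_act_hom S (copower_carrier I (coset_carrier S N)) (copower_act (coset_act S))
           (coset_carrier S N) (coset_act S) (fold_map S i0 g)"
  unfolding is_act_hom_def copower_carrier_def copower_act_def coset_carrier_def coset_act_def fold_map_def
  using normal.rc_in[OF assms(1) _ assms(2)] normal.lc_rc[OF assms(1) normal.lcos_sub[OF assms(1)] _ assms(2)]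
  by auto

lemma fold_sep:
  assumes "N \<lhd> S" "N \<noteq> carrier S" "group S"
    and p: "p \<in> copower_carrier I (coset_carrier S N)" and q: "q \<in> copower_carrier I (coset_carrier S N)"
    and "p \<noteq> q"
  shows "\<exists>g\<in>carrier S. fold_map S (fst p) g p \<noteq> fold_map S (fst p) g q"
proof -
  have sub: "N \<subseteq> carrier S" using assms(1) by (simp add: normal_imp_subgroup subgroup.subset)
  obtain g0 where g0: "g0 \<in> carrier S" "g0 \<notin> N" using assms(2) sub by blast
  have one: "\<one>\<^bsub>S\<^esub> \<in> carrier S" using assms(3) group.is_monoid monoid.one_closed by blast
  show ?thesis
  proof (cases "fst q = fst p")
    case True
    then show ?thesis using assms(6) one unfolding fold_map_def by (auto simp: prod_eq_iff)
  next
    case False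
    show ?thesis
    proof (cases "snd p = snd q")
      case True
      have "snd q \<in> lcosets\<^bsub>S\<^esub> N" using q unfolding copower_carrier_def coset_carrier_def by auto
      hence "snd q #>\<^bsub>S\<^esub> g0 \<noteq> snd q" using normal.rc_ne[OF assms(1) _ g0] by blast
      then show ?thesis using g0 False True unfolding fold_map_def by (intro bexI[of _ g0]) auto
    next
      case ne: False
      have "snd q \<in> lcosets\<^bsub>S\<^esub> N" using q unfolding copower_carrier_def coset_carrier_def by auto
      hence "snd q \<subseteq> carrier S" using normal.lcos_sub[OF assms(1)] by blast
      hence "snd q #>\<^bsub>S\<^esub> \<one>\<^bsub>S\<^esub> = snd q" using group.coset_mult_one[OF assms(3)] by blast
      then show ?thesis using one False ne unfolding fold_map_def by (intro bexI[of _ "\<one>\<^bsub>S\<^esub>"]) auto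
    qed
  qed
qed

theorem proposition3p16:
  fixes S :: "('g, 'm) monoid_scheme" and N :: "'g set"
    and B :: "'b set" and \<beta> :: "'g \<Rightarrow> 'b \<Rightarrow> 'b" and I :: "'i set"
  assumes "group S" and "N \<lhd> S" and "N \<noteq> carrier S"
    and "is_act S B \<beta>" and "I \<noteq> {}"
  shows "geom_equiv S
           (coprod_carrier B (copower_carrier I (coset_carrier S N)))
           (coprod_act \<beta> (copower_act (coset_act S)))
           (coprod_carrier B (coset_carrier S N))
           (coprod_act \<beta> (coset_act S))
       \<and> geom_equiv S
           (copower_carrier I (coset_carrier S N)) (copower_act (coset_act S))
           (coset_carrier S N) (coset_act S)"
proof
  obtain i0 where i0: "i0 \<in> I" using assms(5) by blast
  have emb: "is_act_hom S (coset_carrier S N) (coset_act S)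
     (copower_carrier I (coset_carrier S N)) (copower_act (coset_act S)) (\<lambda>C. (i0, C))"
    unfolding is_act_hom_def copower_carrier_def copower_act_def using i0 by auto
  have embinj: "inj_on (\<lambda>C. (i0, C)) X" for X :: "'g set set" by (simp add: inj_on_def)
  have sepP: "\<forall>a\<in>copower_carrier I (coset_carrier S N). \<forall>b\<in>copower_carrier I (coset_carrier S N).
     a \<noteq> b \<longrightarrow> (\<exists>\<phi>. is_act_hom S (copower_carrier I (coset_carrier S N)) (copower_act (coset_act S))
           (coset_carrier S N) (coset_act S) \<phi> \<and> \<phi> a \<noteq> \<phi> b)"
    using fold_sep[OF assms(2,3,1)] fold_hom[OF assms(2)] by meson
  show "geom_equiv S
           (copower_carrier I (coset_carrier S N)) (copower_act (coset_act S))
           (coset_carrier S N) (coset_act S)"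
    by (rule sep_equiv[OF inj_sep[OF emb embinj] sepP])
  let ?G1 = "coprod_carrier B (copower_carrier I (coset_carrier S N))"
  let ?G2 = "coprod_carrier B (coset_carrier S N)"
  have emb2: "is_act_hom S ?G2 (coprod_act \<beta> (coset_act S)) ?G1 (coprod_act \<beta> (copower_act (coset_act S)))
      (map_sum id (\<lambda>C. (i0, C)))"
    unfolding is_act_hom_def coprod_carrier_def coprod_act_def copower_carrier_def copower_act_def
    using i0 by auto
  have inj2: "inj_on (map_sum id (\<lambda>C. (i0, C))) ?G2"
    by (rule inj_onI) (case_tac x; case_tac y; simp)
  have hom2: "is_act_hom S ?G1 (coprod_act \<beta> (copower_act (coset_act S))) ?G2 (coprod_act \<beta> (coset_act S))
      (map_sum id (fold_map S i g))" if "g \<in> carrier S" for i g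
    using fold_hom[OF assms(2) that, of I i]
    unfolding is_act_hom_def coprod_carrier_def coprod_act_def by auto
  have one: "\<one>\<^bsub>S\<^esub> \<in> carrier S" using assms(1) group.is_monoid monoid.one_closed by blast
  have sep1: "\<forall>a\<in>?G1. \<forall>b\<in>?G1. a \<noteq> b \<longrightarrow> (\<exists>\<phi>. is_act_hom S ?G1 (coprod_act \<beta> (copower_act (coset_act S)))
       ?G2 (coprod_act \<beta> (coset_act S)) \<phi> \<and> \<phi> a \<noteq> \<phi> b)"
  proof (intro ballI impI)
    fix a b assume a: "a \<in> ?G1" and b: "b \<in> ?G1" and ne: "a \<noteq> b"
    show "\<exists>\<phi>. is_act_hom S ?G1 (coprod_act \<beta> (copower_act (coset_act S)))
       ?G2 (coprod_act \<beta> (coset_act S)) \<phi> \<and> \<phi> a \<noteq> \<phi> b"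
    proof (cases "\<exists>p q. a = Inr p \<and> b = Inr q")
      case True
      then obtain p q where pq: "a = Inr p" "b = Inr q" by blast
      have "p \<in> copower_carrier I (coset_carrier S N)" "q \<in> copower_carrier I (coset_carrier S N)"
        using a b pq unfolding coprod_carrier_def by auto
      then obtain g where g: "g \<in> carrier S" "fold_map S (fst p) g p \<noteq> fold_map S (fst p) g q"
        using fold_sep[OF assms(2,3,1)] ne pq by blast
      show ?thesis using hom2[OF g(1)] g(2) pq by (intro exI[of _ "map_sum id (fold_map S (fst p) g)"]) auto
    next
      case False
      then show ?thesis using hom2[OF one, of i0] ne
        by (intro exI[of _ "map_sum id (fold_map S i0 \<one>\<^bsub>S\<^esub>)"]) (cases a; cases b; auto)
    qed
  qed
  show "geom_equiv S ?G1 (coprod_act \<beta> (copower_act (coset_act S))) ?G2 (coprod_act \<beta> (coset_act S))"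
    by (rule sep_equiv[OF inj_sep[OF emb2 inj2] sep1])
qed

end
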